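(* Let $(X,d)$ be a compact metric space and $f:X\to X$ a continuous map. Then $$\mathcal{E}(f_{\mathcal{K}})=h_{top}(f).$$
   Context: $h_{top}(f)$ is the topological entropy of $f$. For $n\in\mathbb{N}$, $d_n(x,y)=\max_{0\le i\le n-1} d(f^ix,f^iy)$. $\mathcal K(X)$ is the space of nonempty closed subsets of $X$ with the Hausdorff metric, and $f_{\mathcal K}(B)=f(B)$. For $A\subset X$ let $A^\varepsilon_n=\{x\in X: d_n(x,A)<\varepsilon\}$, and for $B,C\in\mathcal K(X)$ let $H^n(B,C)=\inf\{\varepsilon>0: B\subset C^\varepsilon_n \text{ and } C\subset B^\varepsilon_n\}$. For nonempty $\mathcal Z\subset\mathcal K(X)$, $N_{\mathcal K}(\mathcal Z,n,\varepsilon)$ is the smallest cardinality of a set $\mathcal G\subset\mathcal K(X)$ such that every $B\in\mathcal Z$ has some $C\in\mathcal G$ with $H^n(B,C)\le\varepsilon$. The entropy order is $\mathcal E(f_{\mathcal K},\mathcal Z)=\lim_{\varepsilon\to0}\limsup_{n\to\infty}\frac{\log\log N_{\mathcal K}(\mathcal Z,n,\varepsilon)}{n}$ (convention $\log 0=0$), and $\mathcal E(f_{\mathcal K}):=\mathcal E(f_{\mathcal K},\mathcal K(X))$. *)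

theory Defs
  imports "HOL-Analysis.Analysis"
begin

text \<open>Bowen metric d_n(x,y) = max_{0 \<le> i \<le> n-1} d(f^i x, f^i y).
  (The 0 inserted into the Max only matters for n = 0, where it makes the value 0.)\<close>
definition bowen_dist :: "('a::metric_space \<Rightarrow> 'a) \<Rightarrow> nat \<Rightarrow> 'a \<Rightarrow> 'a \<Rightarrow> real" where
  "bowen_dist f n x y = Max (insert 0 ((\<lambda>i. dist ((f ^^ i) x) ((f ^^ i) y)) ` {..<n}))"

definition bowen_setdist :: "('a::metric_space \<Rightarrow> 'a) \<Rightarrow> nat \<Rightarrow> 'a \<Rightarrow> 'a set \<Rightarrow> real" where
  "bowen_setdist f n x A = (INF a\<in>A. bowen_dist f n x a)"

definition bowen_nbhd :: "('a::metric_space \<Rightarrow> 'a) \<Rightarrow> 'a set \<Rightarrow> nat \<Rightarrow> real \<Rightarrow> 'a set \<Rightarrow> 'a set" where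
  "bowen_nbhd f X n \<epsilon> A = {x \<in> X. bowen_setdist f n x A < \<epsilon>}"

definition hausdorff_n :: "('a::metric_space \<Rightarrow> 'a) \<Rightarrow> 'a set \<Rightarrow> nat \<Rightarrow> 'a set \<Rightarrow> 'a set \<Rightarrow> real" where
  "hausdorff_n f X n B C =
     Inf {\<epsilon>. \<epsilon> > 0 \<and> B \<subseteq> bowen_nbhd f X n \<epsilon> C \<and> C \<subseteq> bowen_nbhd f X n \<epsilon> B}"

definition hyperspace :: "'a::topological_space set \<Rightarrow> 'a set set" where
  "hyperspace X = {B. B \<noteq> {} \<and> closed B \<and> B \<subseteq> X}"

definition hyper_cover_num ::
  "('a::metric_space \<Rightarrow> 'a) \<Rightarrow> 'a set \<Rightarrow> 'a set set \<Rightarrow> nat \<Rightarrow> real \<Rightarrow> nat" where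
  "hyper_cover_num f X Z n \<epsilon> =
     (LEAST k. \<exists>G. G \<subseteq> hyperspace X \<and> finite G \<and> card G = k \<and>
                    (\<forall>B\<in>Z. \<exists>C\<in>G. hausdorff_n f X n B C \<le> \<epsilon>))"

text \<open>Entropy order E(f_K, Z) (natural logarithm; Isabelle's ln 0 = 0 matches the
  convention log 0 = 0).\<close>
definition entropy_order_hyper ::
  "('a::metric_space \<Rightarrow> 'a) \<Rightarrow> 'a set \<Rightarrow> 'a set set \<Rightarrow> ereal" where
  "entropy_order_hyper f X Z =
     Lim (at_right (0::real))
       (\<lambda>\<epsilon>. limsup (\<lambda>n. ereal (ln (ln (real (hyper_cover_num f X Z n \<epsilon>))) / real n)))"

definition span_num :: "('a::metric_space \<Rightarrow> 'a) \<Rightarrow> 'a set \<Rightarrow> nat \<Rightarrow> real \<Rightarrow> nat" where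
  "span_num f X n \<epsilon> =
     (LEAST k. \<exists>F. F \<subseteq> X \<and> finite F \<and> card F = k \<and>
                    (\<forall>x\<in>X. \<exists>y\<in>F. bowen_dist f n x y \<le> \<epsilon>))"

definition top_entropy :: "('a::metric_space \<Rightarrow> 'a) \<Rightarrow> 'a set \<Rightarrow> ereal" where
  "top_entropy f X =
     Lim (at_right (0::real))
       (\<lambda>\<epsilon>. limsup (\<lambda>n. ereal (ln (real (span_num f X n \<epsilon>)) / real n)))"

end

theory Submission
  imports Defs
begin


lemma bd_ge: "i < n \<Longrightarrow> dist ((f ^^ i) x) ((f ^^ i) y) \<le> bowen_dist f n x y"
  unfolding bowen_dist_def by (intro Max_ge) auto

lemma bd_nonneg: "0 \<le> bowen_dist f n x y"
  unfolding bowen_dist_def by (intro Max_ge) auto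

lemma bd_le_iff: "bowen_dist f n x y \<le> e \<longleftrightarrow> 0 \<le> e \<and> (\<forall>i<n. dist ((f ^^ i) x) ((f ^^ i) y) \<le> e)"
  unfolding bowen_dist_def by (subst Max_le_iff) auto

lemma bd_less_iff: "bowen_dist f n x y < e \<longleftrightarrow> 0 < e \<and> (\<forall>i<n. dist ((f ^^ i) x) ((f ^^ i) y) < e)"
  unfolding bowen_dist_def by (subst Max_less_iff) auto

lemma bd_refl[simp]: "bowen_dist f n x x = 0"
  using bd_le_iff[of f n x x 0] bd_nonneg[of f n x x] by auto

lemma bd_sym: "bowen_dist f n x y = bowen_dist f n y x"
  unfolding bowen_dist_def by (simp add: dist_commute)

lemma bd_triangle: "bowen_dist f n x z \<le> bowen_dist f n x y + bowen_dist f n y z"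
proof -
  have "\<forall>i<n. dist ((f ^^ i) x) ((f ^^ i) z) \<le> bowen_dist f n x y + bowen_dist f n y z"
    by (meson add_mono bd_ge dist_triangle order_trans)
  then show ?thesis using bd_le_iff bd_nonneg by (metis add_nonneg_nonneg)
qed

lemma iter_in: "f ` X \<subseteq> X \<Longrightarrow> x \<in> X \<Longrightarrow> (f ^^ i) x \<in> X"
  by (induction i) auto

lemma iter_cont: "continuous_on X f \<Longrightarrow> f ` X \<subseteq> X \<Longrightarrow> continuous_on X (f ^^ i)"
proof (induction i)
  case 0 then show ?case by (simp add: continuous_on_id)
next
  case (Suc i)
  have "continuous_on X (f \<circ> (f ^^ i))"
  proof (rule continuous_on_compose)
    show "continuous_on X (f ^^ i)" by (rule Suc.IH) (use Suc in auto)
    have "(f ^^ i) ` X \<subseteq> X" using iter_in[OF Suc.prems(2)] by auto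
    then show "continuous_on ((f ^^ i) ` X) f" using Suc.prems(1) continuous_on_subset by blast
  qed
  then show ?case by simp
qed

lemma min_delta:
  fixes n :: nat and P :: "nat \<Rightarrow> real \<Rightarrow> bool"
  assumes "\<forall>i<n. \<exists>d>0. P i d" and "\<And>i d d'. P i d \<Longrightarrow> 0 < d' \<Longrightarrow> d' \<le> d \<Longrightarrow> P i d'"
  shows "\<exists>d>0. \<forall>i<n. P i d"
  using assms(1)
proof (induction n)
  case 0 then show ?case by (auto intro: exI[of _ 1])
next
  case (Suc n)
  then obtain d where d: "d > 0" "\<forall>i<n. P i d" by auto
  obtain d' where d': "d' > 0" "P n d'" using Suc.prems by auto
  show ?case
  proof (rule exI[of _ "min d d'"], intro conjI allI impI)
    show "0 < min d d'" using d d' by simp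
    fix i assume "i < Suc n"
    then consider "i < n" | "i = n" by linarith
    then show "P i (min d d')"
    proof cases
      case 1 then show ?thesis using assms(2)[of i d "min d d'"] d d' by simp
    next
      case 2 then show ?thesis using assms(2)[of n d' "min d d'"] d d' by simp
    qed
  qed
qed

lemma span_exists:
  fixes f :: "'a::metric_space \<Rightarrow> 'a"
  assumes "compact X" "continuous_on X f" "f ` X \<subseteq> X" "e > 0"
  shows "\<exists>F. F \<subseteq> X \<and> finite F \<and> (\<forall>x\<in>X. \<exists>y\<in>F. bowen_dist f n x y < e)"
proof -
  define P where "P = (\<lambda>i d. \<forall>x\<in>X. \<forall>x'\<in>X. dist x' x < d \<longrightarrow> dist ((f^^i) x') ((f^^i) x) < e)"
  have "\<exists>d>0. P i d" for i
  proof -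
    have "uniformly_continuous_on X (f ^^ i)"
      by (rule compact_uniformly_continuous[OF iter_cont[OF assms(2,3)] assms(1)])
    then show ?thesis unfolding uniformly_continuous_on_def P_def using assms(4) by blast
  qed
  moreover have "P i d'" if "P i d" "0 < d'" "d' \<le> d" for i d d'
    using that unfolding P_def by force
  ultimately obtain d where d: "d > 0" "\<forall>i<n. P i d"
    using min_delta[of n P] by blast
  have "\<forall>\<epsilon>>0. \<exists>k. finite k \<and> k \<subseteq> X \<and> X \<subseteq> (\<Union>x\<in>k. ball x \<epsilon>)"
    by (rule seq_compact_imp_totally_bounded[OF compact_imp_seq_compact[OF assms(1)]])
  then have "\<exists>k. finite k \<and> k \<subseteq> X \<and> X \<subseteq> (\<Union>x\<in>k. ball x d)"
    using d(1) by simp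
  then obtain k where k: "finite k" "k \<subseteq> X" "X \<subseteq> (\<Union>x\<in>k. ball x d)"
    by (elim exE conjE)
  have "\<exists>y\<in>k. bowen_dist f n x y < e" if "x \<in> X" for x
  proof -
    obtain y where y: "y \<in> k" "x \<in> ball y d" using k(3) \<open>x \<in> X\<close> by blast
    have "y \<in> X" using y k(2) by blast
    have "dist x y < d" using y(2) by (simp add: dist_commute)
    then have "\<forall>i<n. dist ((f^^i) x) ((f^^i) y) < e"
      using d(2) \<open>y \<in> X\<close> \<open>x \<in> X\<close> unfolding P_def by blast
    then show ?thesis using y(1) assms(4) bd_less_iff by blast
  qed
  then show ?thesis using k(1,2) by blast
qed



locale dyn =
  fixes f :: "'a::metric_space \<Rightarrow> 'a" and X :: "'a set"
  assumes cpt: "compact X" and cont: "continuous_on X f" and inv: "f ` X \<subseteq> X"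
begin

lemma bd_bounded: "\<exists>b\<ge>0. \<forall>x\<in>X. \<forall>y\<in>X. bowen_dist f n x y \<le> b"
proof -
  obtain e where e: "\<forall>x\<in>X. \<forall>y\<in>X. dist x y \<le> e"
    using compact_imp_bounded[OF cpt, unfolded bounded_two_points] by (elim exE)
  define b where "b = max e 0"
  have b0: "0 \<le> b" unfolding b_def by simp
  have "\<forall>x\<in>X. \<forall>y\<in>X. bowen_dist f n x y \<le> b"
  proof (intro ballI)
    fix x y assume xy: "x \<in> X" "y \<in> X"
    have "dist ((f^^i) x) ((f^^i) y) \<le> b" for i
    proof -
      have "(f^^i) x \<in> X" "(f^^i) y \<in> X" using iter_in[OF inv] xy by auto
      then have "dist ((f^^i) x) ((f^^i) y) \<le> e" using e by blast
      then show ?thesis unfolding b_def by simp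
    qed
    then show "bowen_dist f n x y \<le> b" using bd_le_iff[of f n x y b] b0 by simp
  qed
  then show ?thesis using b0 by blast
qed

lemma setdist_le: "a \<in> A \<Longrightarrow> bowen_setdist f n x A \<le> bowen_dist f n x a"
  unfolding bowen_setdist_def
  by (rule cINF_lower) (auto intro: bdd_belowI[of _ 0] simp: bd_nonneg)

lemma setdist_lessD: "A \<noteq> {} \<Longrightarrow> bowen_setdist f n x A < e \<Longrightarrow> \<exists>a\<in>A. bowen_dist f n x a < e"
  unfolding bowen_setdist_def
  by (subst (asm) cINF_less_iff) (auto intro: bdd_belowI[of _ 0] simp: bd_nonneg)

definition Hset where "Hset n B C = {\<epsilon>. \<epsilon> > 0 \<and> B \<subseteq> bowen_nbhd f X n \<epsilon> C \<and> C \<subseteq> bowen_nbhd f X n \<epsilon> B}"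

lemma Hset_big:
  assumes "B \<subseteq> X" "C \<subseteq> X" "B \<noteq> {}" "C \<noteq> {}"
  shows "Hset n B C \<noteq> {}"
proof -
  obtain b where b: "b \<ge> 0" "\<forall>x\<in>X. \<forall>y\<in>X. bowen_dist f n x y \<le> b"
    using bd_bounded by blast
  have 1: "B \<subseteq> bowen_nbhd f X n (b+1) C"
  proof
    fix x assume "x \<in> B"
    obtain c where "c \<in> C" using assms(4) by blast
    then have "bowen_setdist f n x C \<le> b" using setdist_le[of c C n x] b assms \<open>x \<in> B\<close> by force
    then show "x \<in> bowen_nbhd f X n (b+1) C" using assms \<open>x \<in> B\<close> unfolding bowen_nbhd_def by auto
  qed
  have 2: "C \<subseteq> bowen_nbhd f X n (b+1) B"
  proof
    fix x assume "x \<in> C"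
    obtain c where "c \<in> B" using assms(3) by blast
    then have "bowen_setdist f n x B \<le> b" using setdist_le[of c B n x] b assms \<open>x \<in> C\<close> by force
    then show "x \<in> bowen_nbhd f X n (b+1) B" using assms \<open>x \<in> C\<close> unfolding bowen_nbhd_def by auto
  qed
  show ?thesis using 1 2 b(1) unfolding Hset_def by (intro ex_in_conv[THEN iffD1] exI[of _ "b+1"]) auto
qed

lemma H_le_D:
  assumes "B \<subseteq> X" "C \<subseteq> X" "B \<noteq> {}" "C \<noteq> {}" "hausdorff_n f X n B C \<le> \<epsilon>" "\<epsilon> < \<epsilon>'"
  shows "(\<forall>x\<in>B. \<exists>c\<in>C. bowen_dist f n x c < \<epsilon>') \<and> (\<forall>c\<in>C. \<exists>x\<in>B. bowen_dist f n c x < \<epsilon>')"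
proof -
  have "Inf (Hset n B C) < \<epsilon>'" using assms(5,6) unfolding hausdorff_n_def Hset_def by simp
  then obtain s where s: "s \<in> Hset n B C" "s < \<epsilon>'" using cInf_lessD[OF Hset_big[OF assms(1-4)]] by blast
  have sB: "B \<subseteq> bowen_nbhd f X n s C" and sC: "C \<subseteq> bowen_nbhd f X n s B"
    using s(1) unfolding Hset_def by auto
  show ?thesis
  proof (intro conjI ballI)
    fix x assume "x \<in> B"
    then have "bowen_setdist f n x C < s" using sB unfolding bowen_nbhd_def by blast
    then have "bowen_setdist f n x C < \<epsilon>'" using s(2) by linarith
    then show "\<exists>c\<in>C. bowen_dist f n x c < \<epsilon>'" using setdist_lessD assms(4) by blast
  next
    fix x assume "x \<in> C"
    then have "bowen_setdist f n x B < s" using sC unfolding bowen_nbhd_def by blast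
    then have "bowen_setdist f n x B < \<epsilon>'" using s(2) by linarith
    then show "\<exists>c\<in>B. bowen_dist f n x c < \<epsilon>'" using setdist_lessD assms(3) by blast
  qed
qed

lemma H_le_I:
  assumes "B \<subseteq> X" "C \<subseteq> X" "0 \<le> \<epsilon>"
    "\<forall>x\<in>B. \<exists>c\<in>C. bowen_dist f n x c \<le> \<epsilon>" "\<forall>c\<in>C. \<exists>x\<in>B. bowen_dist f n c x \<le> \<epsilon>"
  shows "hausdorff_n f X n B C \<le> \<epsilon>"
proof -
  have mem: "e \<in> Hset n B C" if "\<epsilon> < e" for e
  proof -
    have "B \<subseteq> bowen_nbhd f X n e C"
    proof
      fix x assume "x \<in> B"
      then obtain c where "c \<in> C" "bowen_dist f n x c \<le> \<epsilon>" using assms(4) by blast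
      then have "bowen_setdist f n x C < e" using setdist_le[of c C n x] that by linarith
      then show "x \<in> bowen_nbhd f X n e C" using assms(1) \<open>x \<in> B\<close> unfolding bowen_nbhd_def by auto
    qed
    moreover have "C \<subseteq> bowen_nbhd f X n e B"
    proof
      fix x assume "x \<in> C"
      then obtain c where "c \<in> B" "bowen_dist f n x c \<le> \<epsilon>" using assms(5) by blast
      then have "bowen_setdist f n x B < e" using setdist_le[of c B n x] that by linarith
      then show "x \<in> bowen_nbhd f X n e B" using assms(2) \<open>x \<in> C\<close> unfolding bowen_nbhd_def by auto
    qed
    ultimately show ?thesis using that assms(3) unfolding Hset_def by auto
  qed
  have "Inf (Hset n B C) \<le> \<epsilon>"
  proof (rule dense_ge)
    fix e assume "\<epsilon> < e"
    show "Inf (Hset n B C) \<le> e"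
      by (rule cInf_lower[OF mem[OF \<open>\<epsilon> < e\<close>]]) (auto simp: Hset_def intro: bdd_belowI[of _ 0])
  qed
  then show ?thesis unfolding hausdorff_n_def Hset_def by simp
qed

end


context dyn begin

lemma span_le: "F \<subseteq> X \<Longrightarrow> finite F \<Longrightarrow> \<forall>x\<in>X. \<exists>y\<in>F. bowen_dist f n x y \<le> \<epsilon> \<Longrightarrow> span_num f X n \<epsilon> \<le> card F"
  unfolding span_num_def by (rule Least_le) blast

lemma span_ex:
  assumes "\<epsilon> > 0"
  shows "\<exists>F. F \<subseteq> X \<and> finite F \<and> card F = span_num f X n \<epsilon> \<and> (\<forall>x\<in>X. \<exists>y\<in>F. bowen_dist f n x y \<le> \<epsilon>)"
proof -
  obtain F0 where F0: "F0 \<subseteq> X" "finite F0" "\<forall>x\<in>X. \<exists>y\<in>F0. bowen_dist f n x y < \<epsilon>"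
    using span_exists[OF cpt cont inv assms, of n] by (elim exE conjE)
  have "\<forall>x\<in>X. \<exists>y\<in>F0. bowen_dist f n x y \<le> \<epsilon>"
  proof
    fix x assume "x \<in> X"
    then obtain y where "y \<in> F0" "bowen_dist f n x y < \<epsilon>" using F0(3) by blast
    then show "\<exists>y\<in>F0. bowen_dist f n x y \<le> \<epsilon>" by (intro bexI[of _ y]) auto
  qed
  then have "\<exists>F. F \<subseteq> X \<and> finite F \<and> card F = card F0 \<and> (\<forall>x\<in>X. \<exists>y\<in>F. bowen_dist f n x y \<le> \<epsilon>)"
    using F0 by blast
  then show ?thesis unfolding span_num_def by (rule LeastI)
qed

lemma span_anti:
  assumes "0 < \<epsilon>1" "\<epsilon>1 \<le> \<epsilon>2"
  shows "span_num f X n \<epsilon>2 \<le> span_num f X n \<epsilon>1"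
proof -
  obtain F where F: "F \<subseteq> X" "finite F" "card F = span_num f X n \<epsilon>1" "\<forall>x\<in>X. \<exists>y\<in>F. bowen_dist f n x y \<le> \<epsilon>1"
    using span_ex[OF assms(1), of n] by (elim exE conjE)
  have "\<forall>x\<in>X. \<exists>y\<in>F. bowen_dist f n x y \<le> \<epsilon>2"
  proof
    fix x assume "x \<in> X"
    then obtain y where "y \<in> F" "bowen_dist f n x y \<le> \<epsilon>1" using F(4) by blast
    then show "\<exists>y\<in>F. bowen_dist f n x y \<le> \<epsilon>2" using assms(2) by (intro bexI[of _ y]) auto
  qed
  then show ?thesis using span_le[OF F(1,2)] F(3) by simp
qed

definition sep where "sep n \<delta> E \<longleftrightarrow> E \<subseteq> X \<and> (\<forall>x\<in>E. \<forall>y\<in>E. x \<noteq> y \<longrightarrow> \<delta> < bowen_dist f n x y)"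

lemma sep_bound:
  assumes "\<delta> > 0" "sep n \<delta> E"
  shows "finite E \<and> card E \<le> span_num f X n (\<delta>/3)"
proof -
  obtain F where F: "F \<subseteq> X" "finite F" "card F = span_num f X n (\<delta>/3)" "\<forall>x\<in>X. \<exists>y\<in>F. bowen_dist f n x y \<le> \<delta>/3"
  proof -
    have "\<delta>/3 > 0" using assms(1) by simp
    from span_ex[OF this, of n] show ?thesis using that by blast
  qed
  define g where "g x = (SOME y. y \<in> F \<and> bowen_dist f n x y \<le> \<delta>/3)" for x
  have g: "g x \<in> F \<and> bowen_dist f n x (g x) \<le> \<delta>/3" if "x \<in> E" for x
  proof -
    have "x \<in> X" using that assms(2) unfolding sep_def by blast
    then have "\<exists>y. y \<in> F \<and> bowen_dist f n x y \<le> \<delta>/3" using F(4) by blast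
    then show ?thesis unfolding g_def by (rule someI_ex)
  qed
  have inj: "inj_on g E"
  proof (rule inj_onI)
    fix x x' assume xx: "x \<in> E" "x' \<in> E" "g x = g x'"
    have "bowen_dist f n x x' \<le> bowen_dist f n x (g x) + bowen_dist f n (g x) x'"
      by (rule bd_triangle)
    also have "bowen_dist f n (g x) x' = bowen_dist f n x' (g x')" using xx(3) bd_sym by metis
    finally have "bowen_dist f n x x' < \<delta>" using g[OF xx(1)] g[OF xx(2)] assms(1) by linarith
    then show "x = x'" using assms(2) xx unfolding sep_def by force
  qed
  have sub: "g ` E \<subseteq> F" using g by blast
  have "finite E" using inj_on_finite[OF inj sub F(2)] .
  moreover have "card E \<le> card F" using card_inj_on_le[OF inj sub F(2)] .
  ultimately show ?thesis using F(3) by simp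
qed

lemma sep_exists:
  assumes "\<epsilon> > 0"
  shows "\<exists>E. sep n (3*\<epsilon>) E \<and> finite E \<and> span_num f X n (3*\<epsilon>) \<le> card E"
proof -
  have bnd: "\<forall>E. sep n (3*\<epsilon>) E \<longrightarrow> card E < span_num f X n \<epsilon> + 1"
  proof (intro allI impI)
    fix E assume "sep n (3*\<epsilon>) E"
    then have "card E \<le> span_num f X n (3*\<epsilon>/3)" using sep_bound[of "3*\<epsilon>" n E] assms by simp
    then show "card E < span_num f X n \<epsilon> + 1" by simp
  qed
  have "sep n (3*\<epsilon>) {}" unfolding sep_def by simp
  then obtain E where E: "sep n (3*\<epsilon>) E" "\<forall>E'. sep n (3*\<epsilon>) E' \<longrightarrow> card E' \<le> card E"
    using Lattices_Big.ex_has_greatest_nat[of "sep n (3*\<epsilon>)" "{}" card, OF _ bnd] by blast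
  have finE: "finite E" using sep_bound[of "3*\<epsilon>" n E] assms E(1) by auto
  have EX: "E \<subseteq> X" using E(1) unfolding sep_def by blast
  have span: "\<forall>x\<in>X. \<exists>y\<in>E. bowen_dist f n x y \<le> 3*\<epsilon>"
  proof (rule ballI, rule ccontr)
    fix x assume x: "x \<in> X" "\<not> (\<exists>y\<in>E. bowen_dist f n x y \<le> 3*\<epsilon>)"
    then have far: "\<forall>y\<in>E. 3*\<epsilon> < bowen_dist f n x y" by auto
    have "x \<notin> E" using far assms by force
    have "sep n (3*\<epsilon>) (insert x E)"
      unfolding sep_def
    proof (intro conjI ballI impI)
      show "insert x E \<subseteq> X" using x(1) EX by blast
    next
      fix y z assume yz: "y \<in> insert x E" "z \<in> insert x E" "y \<noteq> z"
      show "3*\<epsilon> < bowen_dist f n y z"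
      proof (cases "y = x")
        case True
        then have "z \<in> E" using yz by blast
        then show ?thesis using far True by blast
      next
        case False
        then have y: "y \<in> E" using yz by blast
        show ?thesis
        proof (cases "z = x")
          case True
          then show ?thesis using far y bd_sym by metis
        next
          case False
          then have "z \<in> E" using yz by blast
          then show ?thesis using y yz(3) E(1) unfolding sep_def by blast
        qed
      qed
    qed
    then have "card (insert x E) \<le> card E" using E(2) by blast
    moreover have "card (insert x E) = card E + 1" using finE \<open>x \<notin> E\<close> by simp
    ultimately show False by simp
  qed
  show ?thesis using E(1) finE span_le[OF EX finE span] by blast
qed

end


context dyn begin

lemma fin_hyper: "A \<subseteq> X \<Longrightarrow> finite A \<Longrightarrow> A \<noteq> {} \<Longrightarrow> A \<in> hyperspace X"
  unfolding hyperspace_def by (simp add: finite_imp_closed)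

lemma cover_ex:
  assumes "\<epsilon> > 0"
  shows "\<exists>G. G \<subseteq> hyperspace X \<and> finite G \<and> card G \<le> 2 ^ span_num f X n \<epsilon> \<and>
             (\<forall>B\<in>hyperspace X. \<exists>C\<in>G. hausdorff_n f X n B C \<le> \<epsilon>)"
proof -
  obtain F where F: "F \<subseteq> X" "finite F" "card F = span_num f X n \<epsilon>" "\<forall>x\<in>X. \<exists>y\<in>F. bowen_dist f n x y \<le> \<epsilon>"
    using span_ex[OF assms, of n] by (elim exE conjE)
  define G where "G = Pow F - {{}}"
  have GH: "G \<subseteq> hyperspace X"
  proof
    fix A assume "A \<in> G"
    then have "A \<subseteq> F" "A \<noteq> {}" unfolding G_def by auto
    moreover have "A \<subseteq> X" using \<open>A \<subseteq> F\<close> F(1) by (rule subset_trans)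
    moreover have "finite A" using \<open>A \<subseteq> F\<close> F(2) by (rule finite_subset)
    ultimately show "A \<in> hyperspace X" by (intro fin_hyper)
  qed
  have finG: "finite G" unfolding G_def using F(2) by simp
  have cardG: "card G \<le> 2 ^ span_num f X n \<epsilon>"
  proof -
    have "card G \<le> card (Pow F)" unfolding G_def using F(2) by (intro card_mono) auto
    then show ?thesis using card_Pow[of F] F(2,3) by simp
  qed
  have cov: "\<exists>C\<in>G. hausdorff_n f X n B C \<le> \<epsilon>" if B: "B \<in> hyperspace X" for B
  proof -
    have BX: "B \<subseteq> X" "B \<noteq> {}" using B unfolding hyperspace_def by auto
    define C where "C = {y\<in>F. \<exists>x\<in>B. bowen_dist f n x y \<le> \<epsilon>}"
    have 1: "\<forall>x\<in>B. \<exists>c\<in>C. bowen_dist f n x c \<le> \<epsilon>"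
    proof
      fix x assume "x \<in> B"
      then obtain y where "y \<in> F" "bowen_dist f n x y \<le> \<epsilon>" using F(4) BX by blast
      then show "\<exists>c\<in>C. bowen_dist f n x c \<le> \<epsilon>" using \<open>x \<in> B\<close> unfolding C_def by blast
    qed
    have 2: "\<forall>c\<in>C. \<exists>x\<in>B. bowen_dist f n c x \<le> \<epsilon>"
    proof
      fix c assume "c \<in> C"
      then obtain x where "x \<in> B" "bowen_dist f n x c \<le> \<epsilon>" unfolding C_def by blast
      then show "\<exists>x\<in>B. bowen_dist f n c x \<le> \<epsilon>" using bd_sym[of f n x c] by auto
    qed
    have CX: "C \<subseteq> X" using F(1) unfolding C_def by blast
    have "C \<noteq> {}" using 1 BX(2) by blast
    then have "C \<in> G" unfolding G_def C_def by auto
    moreover have "hausdorff_n f X n B C \<le> \<epsilon>"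
      by (rule H_le_I[OF BX(1) CX _ 1 2]) (use assms in simp)
    ultimately show ?thesis by blast
  qed
  show ?thesis using GH finG cardG cov by blast
qed

lemma N_upper:
  assumes "\<epsilon> > 0"
  shows "hyper_cover_num f X (hyperspace X) n \<epsilon> \<le> 2 ^ span_num f X n \<epsilon>"
proof -
  obtain G where G: "G \<subseteq> hyperspace X" "finite G" "card G \<le> 2 ^ span_num f X n \<epsilon>"
      "\<forall>B\<in>hyperspace X. \<exists>C\<in>G. hausdorff_n f X n B C \<le> \<epsilon>"
    using cover_ex[OF assms, of n] by (elim exE conjE)
  have "hyper_cover_num f X (hyperspace X) n \<epsilon> \<le> card G"
    unfolding hyper_cover_num_def by (rule Least_le) (use G in blast)
  then show ?thesis using G(3) by simp
qed

lemma N_witness: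
  assumes "\<epsilon> > 0"
  shows "\<exists>G. G \<subseteq> hyperspace X \<and> finite G \<and> card G = hyper_cover_num f X (hyperspace X) n \<epsilon> \<and>
             (\<forall>B\<in>hyperspace X. \<exists>C\<in>G. hausdorff_n f X n B C \<le> \<epsilon>)"
proof -
  obtain G where G: "G \<subseteq> hyperspace X" "finite G" "card G \<le> 2 ^ span_num f X n \<epsilon>"
      "\<forall>B\<in>hyperspace X. \<exists>C\<in>G. hausdorff_n f X n B C \<le> \<epsilon>"
    using cover_ex[OF assms, of n] by (elim exE conjE)
  have "\<exists>G'. G' \<subseteq> hyperspace X \<and> finite G' \<and> card G' = card G \<and>
             (\<forall>B\<in>hyperspace X. \<exists>C\<in>G'. hausdorff_n f X n B C \<le> \<epsilon>)"
    using G by blast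
  then show ?thesis unfolding hyper_cover_num_def by (rule LeastI)
qed

lemma sep_H:
  assumes "\<epsilon> > 0" "sep n (3*\<epsilon>) E" "A \<subseteq> E" "A' \<subseteq> E" "A \<noteq> {}" "A' \<noteq> {}"
    "C \<subseteq> X" "C \<noteq> {}" "hausdorff_n f X n A C \<le> \<epsilon>" "hausdorff_n f X n A' C \<le> \<epsilon>" "x \<in> A"
  shows "x \<in> A'"
proof -
  have EX: "E \<subseteq> X" using assms(2) unfolding sep_def by blast
  have lt: "\<epsilon> < 3*\<epsilon>/2" using assms(1) by simp
  obtain c where c: "c \<in> C" "bowen_dist f n x c < 3*\<epsilon>/2"
    using H_le_D[OF _ assms(7) assms(5,8,9) lt] assms(3,11) EX by blast
  obtain a where a: "a \<in> A'" "bowen_dist f n c a < 3*\<epsilon>/2"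
    using H_le_D[OF _ assms(7) assms(6,8,10) lt] assms(4) c(1) EX by blast
  have "bowen_dist f n x a \<le> bowen_dist f n x c + bowen_dist f n c a" by (rule bd_triangle)
  then have "bowen_dist f n x a < 3*\<epsilon>" using a c by linarith
  moreover have "x \<in> E" "a \<in> E" using assms(3,4,11) a(1) by auto
  moreover have "\<forall>x\<in>E. \<forall>y\<in>E. x \<noteq> y \<longrightarrow> 3*\<epsilon> < bowen_dist f n x y"
    using assms(2) unfolding sep_def by blast
  ultimately have "x = a" by (meson not_less_iff_gr_or_eq)
  then show ?thesis using a(1) by simp
qed

lemma N_lower:
  assumes "\<epsilon> > 0"
  shows "2 ^ span_num f X n (3*\<epsilon>) \<le> hyper_cover_num f X (hyperspace X) n \<epsilon> + 1"
proof -
  obtain G where G: "G \<subseteq> hyperspace X" "finite G" "card G = hyper_cover_num f X (hyperspace X) n \<epsilon>"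
      "\<forall>B\<in>hyperspace X. \<exists>C\<in>G. hausdorff_n f X n B C \<le> \<epsilon>"
    using N_witness[OF assms, of n] by (elim exE conjE)
  obtain E where E: "sep n (3*\<epsilon>) E" "finite E" "span_num f X n (3*\<epsilon>) \<le> card E"
    using sep_exists[OF assms, of n] by (elim exE conjE)
  have EX: "E \<subseteq> X" using E(1) unfolding sep_def by blast
  define P where "P = Pow E - {{}}"
  have PH: "A \<in> hyperspace X" if "A \<in> P" for A
  proof -
    have "A \<subseteq> E" "A \<noteq> {}" using that unfolding P_def by auto
    moreover have "A \<subseteq> X" using \<open>A \<subseteq> E\<close> EX by (rule subset_trans)
    moreover have "finite A" using \<open>A \<subseteq> E\<close> E(2) by (rule finite_subset)
    ultimately show ?thesis by (intro fin_hyper)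
  qed
  define \<phi> where "\<phi> A = (SOME C. C \<in> G \<and> hausdorff_n f X n A C \<le> \<epsilon>)" for A
  have phi: "\<phi> A \<in> G \<and> hausdorff_n f X n A (\<phi> A) \<le> \<epsilon>" if "A \<in> P" for A
  proof -
    have "\<exists>C. C \<in> G \<and> hausdorff_n f X n A C \<le> \<epsilon>" using G(4) PH[OF that] by blast
    then show ?thesis unfolding \<phi>_def by (rule someI_ex)
  qed
  have inj: "inj_on \<phi> P"
  proof (rule inj_onI)
    fix A A' assume AA: "A \<in> P" "A' \<in> P" "\<phi> A = \<phi> A'"
    have A: "A \<subseteq> E" "A \<noteq> {}" "A' \<subseteq> E" "A' \<noteq> {}" using AA unfolding P_def by auto
    have "\<phi> A \<in> hyperspace X" using phi[OF AA(1)] G(1) by blast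
    then have C: "\<phi> A \<subseteq> X" "\<phi> A \<noteq> {}" unfolding hyperspace_def by auto
    have h1: "hausdorff_n f X n A (\<phi> A) \<le> \<epsilon>" using phi[OF AA(1)] by blast
    have h2: "hausdorff_n f X n A' (\<phi> A) \<le> \<epsilon>" using phi[OF AA(2)] AA(3) by simp
    show "A = A'"
    proof
      show "A \<subseteq> A'" using sep_H[OF assms E(1) A(1) A(3) A(2) A(4) C h1 h2] by blast
      show "A' \<subseteq> A" using sep_H[OF assms E(1) A(3) A(1) A(4) A(2) C h2 h1] by blast
    qed
  qed
  have sub: "\<phi> ` P \<subseteq> G" using phi by blast
  have "card P \<le> card G" using card_inj_on_le[OF inj sub G(2)] .
  moreover have "card P = 2 ^ card E - 1"
    unfolding P_def using E(2) by (simp add: card_Diff_singleton card_Pow)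
  moreover have "(2::nat) ^ span_num f X n (3*\<epsilon>) \<le> 2 ^ card E"
    using E(3) by (simp add: power_increasing)
  moreover have "(1::nat) \<le> 2 ^ card E" by simp
  ultimately show ?thesis using G(3) by linarith
qed

end


lemma ln2_half: "1/2 \<le> ln (2::real)"
proof -
  have "ln (1/2::real) \<le> 1/2 - 1" by (rule ln_le_minus_one) simp
  then show ?thesis by (simp add: ln_div)
qed

lemma ln_nat_nonneg: "0 \<le> ln (real (k::nat))"
  by (cases "k = 0") auto

lemma ln_nat_mono: "(a::nat) \<le> b \<Longrightarrow> ln (real a) \<le> ln (real b)"
proof (cases "a = 0")
  case True then show ?thesis using ln_nat_nonneg[of b] by simp
next
  case False
  assume "a \<le> b"
  then show ?thesis using False by simp
qed

lemma lnln_small: "(N::nat) \<le> 2 \<Longrightarrow> ln (ln (real N)) \<le> 0"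
proof -
  assume "N \<le> 2"
  then consider "N = 0" | "N = 1" | "N = 2" by linarith
  then show ?thesis
  proof cases
    case 3
    have "0 < ln (2::real)" by simp
    moreover have "ln (2::real) < 1" by (rule ln_2_less_1)
    ultimately show ?thesis using 3 by simp
  qed auto
qed

lemma ln_up:
  assumes "(N::nat) \<le> 2 ^ S"
  shows "ln (ln (real N)) \<le> ln (real S)"
proof (cases "N \<le> 2")
  case True then show ?thesis using lnln_small ln_nat_nonneg by (meson order_trans)
next
  case False
  then have N3: "3 \<le> N" by simp
  have "S \<noteq> 0" using assms N3 by (cases "S = 0") auto
  then have S0: "0 < real S" by simp
  have "(3::real) \<le> real N" using N3 by simp
  then have "ln (272/100) \<le> ln (real N)" by (subst ln_le_cancel_iff) auto
  then have lnN: "1 < ln (real N)" using ln_272_gt_1 by linarith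
  have "ln (real N) \<le> ln (2 ^ S)" using assms N3
    by (subst ln_le_cancel_iff) (auto simp del: of_nat_power simp: of_nat_power[symmetric])
  also have "\<dots> = real S * ln 2" by (rule ln_realpow)
  finally have "ln (real N) \<le> real S * ln 2" .
  then have "ln (ln (real N)) \<le> ln (real S * ln 2)" using lnN by simp
  also have "\<dots> = ln (real S) + ln (ln 2)" using S0 by (simp add: ln_mult)
  also have "\<dots> \<le> ln (real S)" using lnln_small[of 2] by simp
  finally show ?thesis .
qed

lemma ln_lo:
  assumes "2 ^ S \<le> (N::nat) + 1"
  shows "ln (real S) \<le> ln (ln (real N)) + 2"
proof (cases "S \<le> 1")
  case True
  then have "ln (real S) \<le> 0" by (cases "S = 0") auto
  moreover have "-1 \<le> ln (ln (real N))"
  proof (cases "N \<le> 1")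
    case True then have "N = 0 \<or> N = 1" by linarith
    then show ?thesis by auto
  next
    case False
    then have "(2::real) \<le> real N" by simp
    then have "ln 2 \<le> ln (real N)" by simp
    then have "1/2 \<le> ln (real N)" using ln2_half by linarith
    then have "ln (1/2) \<le> ln (ln (real N))" by simp
    moreover have "ln (1/2::real) = - ln 2" by (simp add: ln_div)
    ultimately show ?thesis using ln_2_less_1 by linarith
  qed
  ultimately show ?thesis by linarith
next
  case False
  then have S2: "2 \<le> S" by simp
  obtain k where k: "S = Suc k" using S2 by (cases S) auto
  have "(2::nat) ^ S = 2 * 2 ^ k" using k by simp
  moreover have "(1::nat) \<le> 2 ^ k" by simp
  ultimately have "2 ^ k \<le> N" using assms by linarith
  then have "real (2 ^ k) \<le> real N" by linarith
  then have Nge: "(2::real) ^ (S - 1) \<le> real N" using k by simp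
  have "0 < (2::real) ^ (S - 1)" by simp
  then have Npos: "0 < real N" using Nge by linarith
  have "ln ((2::real) ^ (S - 1)) \<le> ln (real N)" using Nge Npos by simp
  then have "real (S - 1) * ln 2 \<le> ln (real N)" by (simp add: ln_realpow)
  moreover have "real S / 4 \<le> real (S - 1) * ln 2"
  proof -
    have "real S / 2 \<le> real (S - 1)" using S2 by (simp add: of_nat_diff)
    then have "real S / 2 * (1/2) \<le> real (S - 1) * ln 2"
      using ln2_half by (intro mult_mono) auto
    then show ?thesis by simp
  qed
  ultimately have le: "real S / 4 \<le> ln (real N)" by linarith
  have S0: "0 < real S / 4" using S2 by simp
  have "ln (real S / 4) \<le> ln (ln (real N))" using le S0 by simp
  moreover have "ln (real S / 4) = ln (real S) - ln 4" using S0 by (simp add: ln_div)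
  moreover have "ln (4::real) = 2 * ln 2" using ln_realpow[of 2 2] by simp
  ultimately show ?thesis using ln_2_less_1 by linarith
qed



lemma anti_lim:
  fixes G :: "real \<Rightarrow> ereal"
  assumes anti: "\<And>x y. 0 < x \<Longrightarrow> x \<le> y \<Longrightarrow> G y \<le> G x"
  shows "(G \<longlongrightarrow> (SUP x\<in>{0<..}. G x)) (at_right 0)"
proof (rule order_tendstoI)
  fix a assume "a < (SUP x\<in>{0<..}. G x)"
  then have "\<exists>e\<in>{0<..}. a < G e" unfolding less_SUP_iff .
  then obtain e where e: "0 < e" "a < G e" by auto
  have "eventually (\<lambda>x. x \<in> {0<..<e}) (at_right (0::real))" using e(1) by (rule eventually_at_right_real)
  then show "eventually (\<lambda>x. a < G x) (at_right 0)"
  proof (rule eventually_mono)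
    fix x assume "x \<in> {0<..<e}"
    then have "G e \<le> G x" using anti[of x e] by simp
    then show "a < G x" using e(2) by simp
  qed
next
  fix a assume a: "(SUP x\<in>{0<..}. G x) < a"
  show "eventually (\<lambda>x. G x < a) (at_right 0)"
    using eventually_at_right_less[of "0::real"]
  proof (rule eventually_mono)
    fix x :: real assume "0 < x"
    then have "G x \<le> (SUP x\<in>{0<..}. G x)" by (intro SUP_upper) simp
    then show "G x < a" using a by simp
  qed
qed

context dyn begin

definition gS where "gS \<epsilon> = limsup (\<lambda>n. ereal (ln (real (span_num f X n \<epsilon>)) / real n))"
definition hN where "hN \<epsilon> = limsup (\<lambda>n. ereal (ln (ln (real (hyper_cover_num f X (hyperspace X) n \<epsilon>))) / real n))"

lemma gS_anti: "0 < x \<Longrightarrow> x \<le> y \<Longrightarrow> gS y \<le> gS x"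
  unfolding gS_def
proof (intro Limsup_mono always_eventually allI)
  fix n assume "0 < x" "x \<le> y"
  then have "ln (real (span_num f X n y)) \<le> ln (real (span_num f X n x))"
    by (intro ln_nat_mono span_anti)
  then show "ereal (ln (real (span_num f X n y)) / real n) \<le> ereal (ln (real (span_num f X n x)) / real n)"
    by (simp add: divide_right_mono)
qed

lemma hN_le: "0 < x \<Longrightarrow> hN x \<le> gS x"
  unfolding gS_def hN_def
proof (intro Limsup_mono always_eventually allI)
  fix n assume "0 < x"
  then have "ln (ln (real (hyper_cover_num f X (hyperspace X) n x))) \<le> ln (real (span_num f X n x))"
    by (intro ln_up N_upper)
  then show "ereal (ln (ln (real (hyper_cover_num f X (hyperspace X) n x))) / real n) \<le> ereal (ln (real (span_num f X n x)) / real n)"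
    by (simp add: divide_right_mono)
qed

lemma hN_ge: "0 < x \<Longrightarrow> gS (3*x) \<le> hN x"
proof -
  assume x: "0 < x"
  define a where "a n = ln (ln (real (hyper_cover_num f X (hyperspace X) n x))) / real n" for n
  have "gS (3*x) \<le> limsup (\<lambda>n. ereal (2 / real n) + ereal (a n))"
    unfolding gS_def
  proof (intro Limsup_mono always_eventually allI)
    fix n
    have "ln (real (span_num f X n (3*x))) \<le> ln (ln (real (hyper_cover_num f X (hyperspace X) n x))) + 2"
      by (intro ln_lo N_lower x)
    then have "ln (real (span_num f X n (3*x))) / real n \<le> (ln (ln (real (hyper_cover_num f X (hyperspace X) n x))) + 2) / real n"
      by (simp add: divide_right_mono)
    also have "\<dots> = 2 / real n + a n" unfolding a_def by (simp add: add_divide_distrib)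
    finally show "ereal (ln (real (span_num f X n (3*x))) / real n) \<le> ereal (2 / real n) + ereal (a n)"
      by simp
  qed
  also have "\<dots> = ereal 0 + limsup (\<lambda>n. ereal (a n))"
  proof (rule ereal_limsup_lim_add)
    show "(\<lambda>n. ereal (2 / real n)) \<longlonglongrightarrow> ereal 0"
      using lim_const_over_n[of "2::real"] by simp
  qed simp
  also have "\<dots> = hN x" unfolding hN_def a_def by simp
  finally show ?thesis .
qed

lemma main_eq: "Lim (at_right 0) hN = Lim (at_right 0) gS"
proof -
  define L where "L = (SUP x\<in>{0<..}. gS x)"
  have gL: "(gS \<longlongrightarrow> L) (at_right 0)" unfolding L_def by (rule anti_lim) (rule gS_anti)
  define L' where "L' = (SUP x\<in>{0<..}. gS (3*x))"
  have g3: "((\<lambda>x. gS (3*x)) \<longlongrightarrow> L') (at_right 0)" unfolding L'_def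
    by (rule anti_lim) (rule gS_anti; simp)
  have "L' = L"
  proof (rule antisym)
    show "L' \<le> L" unfolding L'_def L_def
      by (rule SUP_least) (auto intro!: SUP_upper)
    show "L \<le> L'" unfolding L'_def L_def
    proof (rule SUP_least)
      fix x :: real assume "x \<in> {0<..}"
      then have "gS (3*(x/3)) \<le> (SUP x\<in>{0<..}. gS (3*x))" by (intro SUP_upper) simp
      then show "gS x \<le> (SUP x\<in>{0<..}. gS (3*x))" by simp
    qed
  qed
  have hL: "(hN \<longlongrightarrow> L) (at_right 0)"
  proof (rule tendsto_sandwich[OF _ _ g3[unfolded \<open>L' = L\<close>] gL])
    show "eventually (\<lambda>x. gS (3*x) \<le> hN x) (at_right 0)"
      using eventually_at_right_less[of "0::real"] by (rule eventually_mono) (rule hN_ge)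
    show "eventually (\<lambda>x. hN x \<le> gS x) (at_right 0)"
      using eventually_at_right_less[of "0::real"] by (rule eventually_mono) (rule hN_le)
  qed
  show ?thesis using tendsto_Lim[OF trivial_limit_at_right_real hL] tendsto_Lim[OF trivial_limit_at_right_real gL]
    by simp
qed

end

theorem theorem1p3:
  fixes f :: "'a::metric_space \<Rightarrow> 'a" and X :: "'a set"
  assumes "compact X" and "continuous_on X f" and "f ` X \<subseteq> X"
  shows "entropy_order_hyper f X (hyperspace X) = top_entropy f X"
proof -
  interpret dyn f X using assms by unfold_locales
  show ?thesis using main_eq unfolding entropy_order_hyper_def top_entropy_def hN_def[abs_def] gS_def[abs_def]
    by simp
qed


end
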